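(* Let $T$ be a tournament and $x\in\mathrm{SA}_1(T)$. If $x_v<3/7$ for all $v\in V(T)$, then $T$ is light.
   Context: A triangle of a tournament $T$ is a set $\{a,b,c\}\subseteq V(T)$ inducing a directed 3-cycle. An unordered pair $ab$ of vertices is a diagonal if there exist vertices $u,v$ with $\{u,v,a\}$ and $\{u,v,b\}$ both triangles. A triangle is heavy if at least two of its three pairs of vertices are diagonals. A tournament is heavy if it has a heavy triangle, and light otherwise. $E(T)$ is the set of unordered pairs of distinct vertices. $\mathrm{SA}_1(T)$ is the set of $x\in\mathbb{R}^{V(T)}$ for which there exists $(x_{ab})_{ab\in E(T)}$ such that: for every triangle $\{a,b,c\}$ (any labelling) and every $d\in V(T)\setminus\{a,b,c\}$, (1) $x_a+x_b+x_c\ge 1+x_{ab}+x_{bc}$, (2) $x_{ad}+x_{bd}+x_{cd}\ge x_d$, (3) $x_a+x_b+x_c+x_d\ge 1+x_{ad}+x_{bd}+x_{cd}$; and for all distinct $a,b$, (4) $1\ge x_a\ge x_{ab}\ge 0$. *)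

theory Defs
  imports Main "HOL.Real"
begin

definition tournament :: "'a set \<Rightarrow> ('a \<Rightarrow> 'a \<Rightarrow> bool) \<Rightarrow> bool" where
  "tournament V A \<longleftrightarrow> finite V \<and> (\<forall>v\<in>V. \<not> A v v) \<and>
     (\<forall>u\<in>V. \<forall>v\<in>V. u \<noteq> v \<longrightarrow> (A u v \<longleftrightarrow> \<not> A v u))"

definition is_triangle :: "'a set \<Rightarrow> ('a \<Rightarrow> 'a \<Rightarrow> bool) \<Rightarrow> 'a set \<Rightarrow> bool" where
  "is_triangle V A S \<longleftrightarrow> S \<subseteq> V \<and>
     (\<exists>a b c. S = {a, b, c} \<and> a \<noteq> b \<and> b \<noteq> c \<and> a \<noteq> c \<and> A a b \<and> A b c \<and> A c a)"

definition is_diagonal :: "'a set \<Rightarrow> ('a \<Rightarrow> 'a \<Rightarrow> bool) \<Rightarrow> 'a \<Rightarrow> 'a \<Rightarrow> bool" where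
  "is_diagonal V A a b \<longleftrightarrow> a \<in> V \<and> b \<in> V \<and> a \<noteq> b \<and>
     (\<exists>u v. is_triangle V A {u, v, a} \<and> is_triangle V A {u, v, b})"

definition heavy_triangle :: "'a set \<Rightarrow> ('a \<Rightarrow> 'a \<Rightarrow> bool) \<Rightarrow> 'a set \<Rightarrow> bool" where
  "heavy_triangle V A S \<longleftrightarrow> is_triangle V A S \<and>
     (\<exists>a b c. S = {a, b, c} \<and> a \<noteq> b \<and> b \<noteq> c \<and> a \<noteq> c \<and>
        is_diagonal V A a b \<and> is_diagonal V A b c)"

definition heavy :: "'a set \<Rightarrow> ('a \<Rightarrow> 'a \<Rightarrow> bool) \<Rightarrow> bool" where
  "heavy V A \<longleftrightarrow> (\<exists>S. heavy_triangle V A S)"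

definition light :: "'a set \<Rightarrow> ('a \<Rightarrow> 'a \<Rightarrow> bool) \<Rightarrow> bool" where
  "light V A \<longleftrightarrow> \<not> heavy V A"

text \<open>SA_1(T). The pair variables x_ab are indexed by the unordered pair {a,b}.
Only the values of x on V matter.\<close>
definition SA1 :: "'a set \<Rightarrow> ('a \<Rightarrow> 'a \<Rightarrow> bool) \<Rightarrow> ('a \<Rightarrow> real) set" where
  "SA1 V A = {x. \<exists>y :: 'a set \<Rightarrow> real.
     (\<forall>a b c. a \<noteq> b \<and> b \<noteq> c \<and> a \<noteq> c \<and> is_triangle V A {a, b, c} \<longrightarrow>
        x a + x b + x c \<ge> 1 + y {a, b} + y {b, c} \<and>
        (\<forall>d \<in> V - {a, b, c}.
           y {a, d} + y {b, d} + y {c, d} \<ge> x d \<and>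
           x a + x b + x c + x d \<ge> 1 + y {a, d} + y {b, d} + y {c, d})) \<and>
     (\<forall>a\<in>V. \<forall>b\<in>V. a \<noteq> b \<longrightarrow> 1 \<ge> x a \<and> x a \<ge> y {a, b} \<and> y {a, b} \<ge> 0)}"

end

theory Submission
  imports Defs
begin

lemma tri_distinct:
  assumes "is_triangle V A {p, q, r}"
  shows "p \<noteq> q \<and> q \<noteq> r \<and> p \<noteq> r \<and> p \<in> V \<and> q \<in> V \<and> r \<in> V"
proof -
  obtain a b c where S: "{p,q,r} = {a,b,c}" "a \<noteq> b" "b \<noteq> c" "a \<noteq> c" "{p,q,r} \<subseteq> V"
    using assms unfolding is_triangle_def by blast
  have "card {p,q,r} = 3" using S by simp
  then show ?thesis using S(5) by (auto simp: card_insert_if split: if_splits)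
qed

theorem lemma1:
  fixes V :: "'a set" and A :: "'a \<Rightarrow> 'a \<Rightarrow> bool" and x :: "'a \<Rightarrow> real"
  assumes "tournament V A"
    and "x \<in> SA1 V A"
    and "\<forall>v\<in>V. x v < 3 / 7"
  shows "light V A"
proof -
  obtain y :: "'a set \<Rightarrow> real" where
    Y1: "\<And>a b c. a \<noteq> b \<Longrightarrow> b \<noteq> c \<Longrightarrow> a \<noteq> c \<Longrightarrow> is_triangle V A {a, b, c} \<Longrightarrow>
        x a + x b + x c \<ge> 1 + y {a, b} + y {b, c} \<and>
        (\<forall>d \<in> V - {a, b, c}.
           y {a, d} + y {b, d} + y {c, d} \<ge> x d \<and>
           x a + x b + x c + x d \<ge> 1 + y {a, d} + y {b, d} + y {c, d})"
    using assms(2) unfolding SA1_def by blast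
  have diag: "y {p, q} > 1/7" if dg: "is_diagonal V A p q" for p q
  proof -
    obtain u v where pq: "p \<in> V" "q \<in> V" "p \<noteq> q" and
      t1: "is_triangle V A {u, v, p}" and t2: "is_triangle V A {u, v, q}"
      using dg unfolding is_diagonal_def by blast
    note d1 = tri_distinct[OF t1] and d2 = tri_distinct[OF t2]
    have e1: "x u + x v + x p \<ge> 1 + y {u, p} + y {p, v}"
      proof -
      have "{u,p,v} = {u,v,p}" by blast
      then show ?thesis using Y1[of u p v] t1 d1 by auto
    qed
    have e2: "x u + x v + x q \<ge> 1 + y {u, q} + y {q, v}"
      proof -
      have "{u,q,v} = {u,v,q}" by blast
      then show ?thesis using Y1[of u q v] t2 d2 by auto
    qed
    have "q \<in> V - {u, v, p}" using pq d2 by auto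
    then have e3: "y {u, q} + y {v, q} + y {p, q} \<ge> x q"
      using Y1[of u v p] t1 d1 by blast
    have "p \<in> V - {u, v, q}" using pq d1 by auto
    then have e4: "y {u, p} + y {v, p} + y {q, p} \<ge> x p"
      using Y1[of u v q] t2 d2 by blast
    have "x u < 3/7" "x v < 3/7" using assms(3) d1 by auto
    moreover have "{q,p} = {p,q}" "{p,v} = {v,p}" "{q,v} = {v,q}" by blast+
    ultimately show ?thesis using e1 e2 e3 e4 by simp
  qed
  show ?thesis unfolding light_def heavy_def heavy_triangle_def
  proof
    assume "\<exists>S. is_triangle V A S \<and> (\<exists>a b c. S = {a, b, c} \<and> a \<noteq> b \<and> b \<noteq> c \<and> a \<noteq> c \<and>
        is_diagonal V A a b \<and> is_diagonal V A b c)"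
    then obtain a b c where t: "is_triangle V A {a,b,c}" and d: "a \<noteq> b" "b \<noteq> c" "a \<noteq> c"
      and g: "is_diagonal V A a b" "is_diagonal V A b c" by blast
    have "x a + x b + x c \<ge> 1 + y {a, b} + y {b, c}" using Y1[OF d t] by blast
    moreover have "x a < 3/7" "x b < 3/7" "x c < 3/7" using assms(3) tri_distinct[OF t] by auto
    ultimately show False using diag[OF g(1)] diag[OF g(2)] by linarith
  qed
qed

end
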